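(* Let $(\mathcal{A},m,f)$ be a presheaf of commutative $k$-algebras on a small category $\mathcal{U}$, so that $\bar{\mathbf{C}}'_{\mathrm{GS}}(\mathcal{A})=\bar{\mathbf{C}}'_{\mathrm{tGS}}(\mathcal{A})\oplus\mathbf{C}'_{\mathrm{simp}}(\mathcal{A})$. Let $((m_1,f_1),c_1)\in Z^2\bar{\mathbf{C}}'_{\mathrm{GS}}(\mathcal{A})$, with corresponding first order twisted deformation $\bar{\mathcal{A}}=(\mathcal{A}[\epsilon],m+m_1\epsilon,f+f_1\epsilon,1+c_1\epsilon)$. Then $\bar{\mathcal{A}}$ is a twisted presheaf with central twists, and its underlying presheaf $\underline{\bar{\mathcal{A}}}=(\mathcal{A}[\epsilon],m+m_1\epsilon,f+f_1\epsilon)$ is the first order presheaf deformation corresponding to $(m_1,f_1)\in Z^2\bar{\mathbf{C}}'_{\mathrm{tGS}}(\mathcal{A})$.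
   Context: $k$ is a commutative ring, $k[\epsilon]=k[\epsilon]/(\epsilon^2)$. $\mathbf{C}_{\mathrm{GS}}(\mathcal{A})$ is the Gerstenhaber–Schack complex: total complex of $\mathbf{C}^{p,q}(\mathcal{A})=\prod_{\sigma\in\mathcal{N}_p(\mathcal{U})}\mathrm{Hom}_k(\mathcal{A}(c\sigma)^{\otimes q},\mathcal{A}(d\sigma))$ (product over $p$-simplices $\sigma=(d\sigma=U_0\to\cdots\to U_p=c\sigma)$ of the nerve) with componentwise Hochschild and simplicial differentials, $d_{\mathrm{GS}}=(-1)^{n+1}d_{\mathrm{simp}}+d_{\mathrm{Hoch}}$ in degree $n$. $\bar{\mathbf{C}}'$ denotes normalized (vanishing when an argument is $1$) and reduced (vanishing on degenerate simplices) cochains; $\mathbf{C}_{\mathrm{tGS}}$ is the part with $q\ge1$ and $\mathbf{C}_{\mathrm{simp}}$ the row $q=0$. A degree 2 cochain is written $(m_1,f_1,c_1)\in\mathbf{C}^{0,2}\oplus\mathbf{C}^{1,1}\oplus\mathbf{C}^{2,0}$. A twisted presheaf $(\mathcal{A},m,f,c)$ consists of algebras, algebra maps $u^*=f^u$ ($f^{1_U}=1$) and invertible $c^{u,v}\in\mathcal{A}(W)$ ($v\colon W\to V,u\colon V\to U$) with $c^{u,v}v^*u^*(a)=(uv)^*(a)c^{u,v}$, $c^{u,vw}c^{v,w}=c^{uv,w}w^*(c^{u,v})$, $c^{u,1}=c^{1,u}=1$; it has central twists if all $c^{u,v}$ are central, and then its underlying presheaf is $(\mathcal{A},m,f)$.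 A normalized reduced 2-cocycle $(m_1,f_1,c_1)$ determines the first order twisted deformation $(\mathcal{A}[\epsilon],m+m_1\epsilon,f+f_1\epsilon,1+c_1\epsilon)$ (a twisted presheaf of $k[\epsilon]$-algebras); when $c_1=0$ it is a presheaf deformation. *)

theory Defs
  imports Main "HOL-Library.Product_Plus"
begin

section \<open>Dual numbers k[eps] = k[eps]/(eps^2)\<close>

datatype 'k dnum = DN 'k 'k

instantiation dnum :: (comm_ring_1) comm_ring_1
begin
definition "0 = DN 0 0"
definition "1 = DN 1 0"
fun plus_dnum :: "'a dnum \<Rightarrow> 'a dnum \<Rightarrow> 'a dnum" where
  "plus_dnum (DN a b) (DN c d) = DN (a + c) (b + d)"
fun minus_dnum :: "'a dnum \<Rightarrow> 'a dnum \<Rightarrow> 'a dnum" where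
  "minus_dnum (DN a b) (DN c d) = DN (a - c) (b - d)"
fun uminus_dnum :: "'a dnum \<Rightarrow> 'a dnum" where
  "uminus_dnum (DN a b) = DN (- a) (- b)"
fun times_dnum :: "'a dnum \<Rightarrow> 'a dnum \<Rightarrow> 'a dnum" where
  "times_dnum (DN a b) (DN c d) = DN (a * c) (a * d + b * c)"
instance
proof
  fix x y z :: "'a dnum"
  show "x * y * z = x * (y * z)"
    by (cases x; cases y; cases z) (simp add: algebra_simps)
  show "x * y = y * x"
    by (cases x; cases y) (simp add: algebra_simps)
  show "1 * x = x"
    by (cases x) (simp add: one_dnum_def)
  show "(x + y) * z = x * z + y * z"
    by (cases x; cases y; cases z) (simp add: algebra_simps)
  show "x + y + z = x + (y + z)"
    by (cases x; cases y; cases z) (simp add: algebra_simps)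
  show "x + y = y + x"
    by (cases x; cases y) (simp add: algebra_simps)
  show "0 + x = x"
    by (cases x) (simp add: zero_dnum_def)
  show "- x + x = 0"
    by (cases x) (simp add: zero_dnum_def)
  show "x - y = x + - y"
    by (cases x; cases y) simp
  show "(0::'a dnum) \<noteq> 1"
    by (simp add: zero_dnum_def one_dnum_def)
qed
end

text \<open>A small category given by a set of objects, a set of morphisms, domain, codomain,
  composition (Comp u v = u o v, defined when Cod v = Dom u) and identities.\<close>

record ('o, 'm) cat =
  Obj  :: "'o set"
  Mor  :: "'m set"
  Dom  :: "'m \<Rightarrow> 'o"
  Cod  :: "'m \<Rightarrow> 'o"
  Comp :: "'m \<Rightarrow> 'm \<Rightarrow> 'm"
  Ident :: "'o \<Rightarrow> 'm"

definition category :: "('o, 'm) cat \<Rightarrow> bool" where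
  "category C \<longleftrightarrow>
     (\<forall>u\<in>Mor C. Dom C u \<in> Obj C \<and> Cod C u \<in> Obj C) \<and>
     (\<forall>U\<in>Obj C. Ident C U \<in> Mor C \<and> Dom C (Ident C U) = U \<and> Cod C (Ident C U) = U) \<and>
     (\<forall>u\<in>Mor C. \<forall>v\<in>Mor C. Cod C v = Dom C u \<longrightarrow>
        Comp C u v \<in> Mor C \<and> Dom C (Comp C u v) = Dom C v \<and> Cod C (Comp C u v) = Cod C u) \<and>
     (\<forall>u\<in>Mor C. \<forall>v\<in>Mor C. \<forall>w\<in>Mor C. Cod C w = Dom C v \<longrightarrow> Cod C v = Dom C u \<longrightarrow>
        Comp C (Comp C u v) w = Comp C u (Comp C v w)) \<and>
     (\<forall>u\<in>Mor C. Comp C u (Ident C (Dom C u)) = u \<and> Comp C (Ident C (Cod C u)) u = u)"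

text \<open>Modules over a commutative ring 'r are subsets of an abelian group 'a, with a scalar
  action smult. Algebras are unital associative, with bilinear multiplication.\<close>

definition module_on :: "('r::comm_ring_1 \<Rightarrow> 'a::ab_group_add \<Rightarrow> 'a) \<Rightarrow> 'a set \<Rightarrow> bool" where
  "module_on smult S \<longleftrightarrow>
     0 \<in> S \<and> (\<forall>x\<in>S. \<forall>y\<in>S. x + y \<in> S) \<and> (\<forall>x\<in>S. - x \<in> S) \<and>
     (\<forall>r. \<forall>x\<in>S. smult r x \<in> S) \<and>
     (\<forall>r. \<forall>x\<in>S. \<forall>y\<in>S. smult r (x + y) = smult r x + smult r y) \<and>
     (\<forall>r s. \<forall>x\<in>S. smult (r + s) x = smult r x + smult s x) \<and>
     (\<forall>r s. \<forall>x\<in>S. smult (r * s) x = smult r (smult s x)) \<and>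
     (\<forall>x\<in>S. smult 1 x = x)"

definition algebra_on ::
  "('r::comm_ring_1 \<Rightarrow> 'a::ab_group_add \<Rightarrow> 'a) \<Rightarrow> 'a set \<Rightarrow> ('a \<Rightarrow> 'a \<Rightarrow> 'a) \<Rightarrow> 'a \<Rightarrow> bool" where
  "algebra_on smult S mult e \<longleftrightarrow>
     module_on smult S \<and> e \<in> S \<and>
     (\<forall>x\<in>S. \<forall>y\<in>S. mult x y \<in> S) \<and>
     (\<forall>x\<in>S. \<forall>y\<in>S. \<forall>z\<in>S. mult (x + y) z = mult x z + mult y z) \<and>
     (\<forall>x\<in>S. \<forall>y\<in>S. \<forall>z\<in>S. mult x (y + z) = mult x y + mult x z) \<and>
     (\<forall>r. \<forall>x\<in>S. \<forall>y\<in>S. mult (smult r x) y = smult r (mult x y)) \<and>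
     (\<forall>r. \<forall>x\<in>S. \<forall>y\<in>S. mult x (smult r y) = smult r (mult x y)) \<and>
     (\<forall>x\<in>S. \<forall>y\<in>S. \<forall>z\<in>S. mult (mult x y) z = mult x (mult y z)) \<and>
     (\<forall>x\<in>S. mult e x = x \<and> mult x e = x)"

definition commutative_on :: "'a set \<Rightarrow> ('a \<Rightarrow> 'a \<Rightarrow> 'a) \<Rightarrow> bool" where
  "commutative_on S mult \<longleftrightarrow> (\<forall>x\<in>S. \<forall>y\<in>S. mult x y = mult y x)"

definition algebra_hom ::
  "('r::comm_ring_1 \<Rightarrow> 'a::ab_group_add \<Rightarrow> 'a) \<Rightarrow> 'a set \<Rightarrow> ('a \<Rightarrow> 'a \<Rightarrow> 'a) \<Rightarrow> 'a \<Rightarrow>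
    'a set \<Rightarrow> ('a \<Rightarrow> 'a \<Rightarrow> 'a) \<Rightarrow> 'a \<Rightarrow> ('a \<Rightarrow> 'a) \<Rightarrow> bool" where
  "algebra_hom smult S mult e S' mult' e' g \<longleftrightarrow>
     (\<forall>x\<in>S. g x \<in> S') \<and>
     (\<forall>x\<in>S. \<forall>y\<in>S. g (x + y) = g x + g y) \<and>
     (\<forall>r. \<forall>x\<in>S. g (smult r x) = smult r (g x)) \<and>
     (\<forall>x\<in>S. \<forall>y\<in>S. g (mult x y) = mult' (g x) (g y)) \<and>
     g e = e'"

section \<open>Presheaves and twisted presheaves of algebras\<close>

text \<open>A presheaf (A, m, f) of 'r-algebras on C: A U is the carrier of the algebra at U with
  multiplication m U and unit e U; for u : V \<rightarrow> U, f u = u^* : A U \<rightarrow> A V.\<close>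

definition presheaf ::
  "('o, 'm) cat \<Rightarrow> ('r::comm_ring_1 \<Rightarrow> 'a::ab_group_add \<Rightarrow> 'a) \<Rightarrow> ('o \<Rightarrow> 'a set) \<Rightarrow>
    ('o \<Rightarrow> 'a \<Rightarrow> 'a \<Rightarrow> 'a) \<Rightarrow> ('o \<Rightarrow> 'a) \<Rightarrow> ('m \<Rightarrow> 'a \<Rightarrow> 'a) \<Rightarrow> bool" where
  "presheaf C smult A m e f \<longleftrightarrow>
     (\<forall>U\<in>Obj C. algebra_on smult (A U) (m U) (e U)) \<and>
     (\<forall>u\<in>Mor C. algebra_hom smult (A (Cod C u)) (m (Cod C u)) (e (Cod C u))
                                   (A (Dom C u)) (m (Dom C u)) (e (Dom C u)) (f u)) \<and>
     (\<forall>U\<in>Obj C. \<forall>a\<in>A U. f (Ident C U) a = a) \<and>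
     (\<forall>u\<in>Mor C. \<forall>v\<in>Mor C. Cod C v = Dom C u \<longrightarrow>
        (\<forall>a\<in>A (Cod C u). f (Comp C u v) a = f v (f u a)))"

text \<open>A twisted presheaf (A, m, f, c): for v : W \<rightarrow> V and u : V \<rightarrow> U, c u v = c^{u,v} \<in> A W.\<close>

definition twisted_presheaf ::
  "('o, 'm) cat \<Rightarrow> ('r::comm_ring_1 \<Rightarrow> 'a::ab_group_add \<Rightarrow> 'a) \<Rightarrow> ('o \<Rightarrow> 'a set) \<Rightarrow>
    ('o \<Rightarrow> 'a \<Rightarrow> 'a \<Rightarrow> 'a) \<Rightarrow> ('o \<Rightarrow> 'a) \<Rightarrow> ('m \<Rightarrow> 'a \<Rightarrow> 'a) \<Rightarrow> ('m \<Rightarrow> 'm \<Rightarrow> 'a) \<Rightarrow> bool" where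
  "twisted_presheaf C smult A m e f c \<longleftrightarrow>
     (\<forall>U\<in>Obj C. algebra_on smult (A U) (m U) (e U)) \<and>
     (\<forall>u\<in>Mor C. algebra_hom smult (A (Cod C u)) (m (Cod C u)) (e (Cod C u))
                                   (A (Dom C u)) (m (Dom C u)) (e (Dom C u)) (f u)) \<and>
     (\<forall>U\<in>Obj C. \<forall>a\<in>A U. f (Ident C U) a = a) \<and>
     (\<forall>u\<in>Mor C. \<forall>v\<in>Mor C. Cod C v = Dom C u \<longrightarrow>
        c u v \<in> A (Dom C v) \<and>
        (\<exists>d\<in>A (Dom C v). m (Dom C v) (c u v) d = e (Dom C v) \<and> m (Dom C v) d (c u v) = e (Dom C v)) \<and>
        (\<forall>a\<in>A (Cod C u). m (Dom C v) (c u v) (f v (f u a)) = m (Dom C v) (f (Comp C u v) a) (c u v))) \<and>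
     (\<forall>u\<in>Mor C. \<forall>v\<in>Mor C. \<forall>w\<in>Mor C. Cod C w = Dom C v \<longrightarrow> Cod C v = Dom C u \<longrightarrow>
        m (Dom C w) (c u (Comp C v w)) (c v w) = m (Dom C w) (c (Comp C u v) w) (f w (c u v))) \<and>
     (\<forall>u\<in>Mor C. c u (Ident C (Dom C u)) = e (Dom C u) \<and> c (Ident C (Cod C u)) u = e (Dom C u))"

definition central_twists ::
  "('o, 'm) cat \<Rightarrow> ('o \<Rightarrow> 'a set) \<Rightarrow> ('o \<Rightarrow> 'a \<Rightarrow> 'a \<Rightarrow> 'a) \<Rightarrow> ('m \<Rightarrow> 'm \<Rightarrow> 'a) \<Rightarrow> bool" where
  "central_twists C A m c \<longleftrightarrow>
     (\<forall>u\<in>Mor C. \<forall>v\<in>Mor C. Cod C v = Dom C u \<longrightarrow>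
        (\<forall>x\<in>A (Dom C v). m (Dom C v) (c u v) x = m (Dom C v) x (c u v)))"

section \<open>Nerve, simplices and the Gerstenhaber--Schack complex\<close>

text \<open>A p-simplex sigma = (U_0 \<rightarrow> U_1 \<rightarrow> ... \<rightarrow> U_p) is represented as (U_0, [s_1, ..., s_p])
  with s_i : U_{i-1} \<rightarrow> U_i. Then d sigma = U_0, c sigma = U_p.\<close>

type_synonym ('o, 'm) simplex = "'o \<times> 'm list"

fun is_path :: "('o, 'm) cat \<Rightarrow> 'o \<Rightarrow> 'm list \<Rightarrow> bool" where
  "is_path C U [] \<longleftrightarrow> U \<in> Obj C"
| "is_path C U (s # ss) \<longleftrightarrow> U \<in> Obj C \<and> s \<in> Mor C \<and> Dom C s = U \<and> is_path C (Cod C s) ss"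

definition simplex :: "('o, 'm) cat \<Rightarrow> nat \<Rightarrow> ('o, 'm) simplex \<Rightarrow> bool" where
  "simplex C p \<sigma> \<longleftrightarrow> length (snd \<sigma>) = p \<and> is_path C (fst \<sigma>) (snd \<sigma>)"

fun endpt :: "('o, 'm) cat \<Rightarrow> 'o \<Rightarrow> 'm list \<Rightarrow> 'o" where
  "endpt C U [] = U"
| "endpt C U (s # ss) = endpt C (Cod C s) ss"

definition sdom :: "('o, 'm) simplex \<Rightarrow> 'o" where "sdom \<sigma> = fst \<sigma>"
definition scod :: "('o, 'm) cat \<Rightarrow> ('o, 'm) simplex \<Rightarrow> 'o" where "scod C \<sigma> = endpt C (fst \<sigma>) (snd \<sigma>)"

fun pull :: "('m \<Rightarrow> 'a \<Rightarrow> 'a) \<Rightarrow> 'm list \<Rightarrow> 'a \<Rightarrow> 'a" where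
  "pull f [] = id"
| "pull f (s # ss) = f s \<circ> pull f ss"

definition degenerate :: "('o, 'm) cat \<Rightarrow> ('o, 'm) simplex \<Rightarrow> bool" where
  "degenerate C \<sigma> \<longleftrightarrow> (\<exists>s\<in>set (snd \<sigma>). s = Ident C (Dom C s))"

text \<open>Face maps of a (p+1)-simplex: face 0 drops U_0, face i (1 \<le> i \<le> p) composes
  s_{i+1} o s_i, face (p+1) drops U_{p+1}.\<close>
definition face :: "('o, 'm) cat \<Rightarrow> nat \<Rightarrow> nat \<Rightarrow> ('o, 'm) simplex \<Rightarrow> ('o, 'm) simplex" where
  "face C p i \<sigma> =
     (if i = 0 then (Cod C (hd (snd \<sigma>)), tl (snd \<sigma>))
      else if i = p + 1 then (fst \<sigma>, butlast (snd \<sigma>))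
      else (fst \<sigma>, take (i - 1) (snd \<sigma>) @ [Comp C (snd \<sigma> ! i) (snd \<sigma> ! (i - 1))] @ drop (i + 1) (snd \<sigma>)))"

text \<open>A (p,q)-cochain assigns to each p-simplex sigma a map A(c sigma)^q \<rightarrow> A(d sigma),
  represented as a function on lists of length q.\<close>
type_synonym ('o, 'm, 'a) cochain = "('o, 'm) simplex \<Rightarrow> 'a list \<Rightarrow> 'a"

definition sgn_pow :: "nat \<Rightarrow> 'a::ab_group_add \<Rightarrow> 'a" where
  "sgn_pow i x = (if even i then x else - x)"

definition args :: "('o, 'm) cat \<Rightarrow> ('o \<Rightarrow> 'a set) \<Rightarrow> nat \<Rightarrow> ('o, 'm) simplex \<Rightarrow> 'a list \<Rightarrow> bool" where
  "args C A q \<sigma> as \<longleftrightarrow> length as = q \<and> set as \<subseteq> A (scod C \<sigma>)"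

text \<open>Normalized reduced cochains \<open>\<bar>C'^{p,q}\<close>: k-multilinear, vanishing when an argument is 1,
  and vanishing on degenerate simplices.\<close>
definition nr_cochain ::
  "('o, 'm) cat \<Rightarrow> ('r::comm_ring_1 \<Rightarrow> 'a::ab_group_add \<Rightarrow> 'a) \<Rightarrow> ('o \<Rightarrow> 'a set) \<Rightarrow> ('o \<Rightarrow> 'a) \<Rightarrow>
    nat \<Rightarrow> nat \<Rightarrow> ('o, 'm, 'a) cochain \<Rightarrow> bool" where
  "nr_cochain C smult A e p q \<phi> \<longleftrightarrow>
     (\<forall>\<sigma>. simplex C p \<sigma> \<longrightarrow>
       (\<forall>as. args C A q \<sigma> as \<longrightarrow> \<phi> \<sigma> as \<in> A (sdom \<sigma>)) \<and>
       (\<forall>as i x y. args C A q \<sigma> as \<longrightarrow> i < q \<longrightarrow> x \<in> A (scod C \<sigma>) \<longrightarrow> y \<in> A (scod C \<sigma>) \<longrightarrow>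
          \<phi> \<sigma> (as[i := x + y]) = \<phi> \<sigma> (as[i := x]) + \<phi> \<sigma> (as[i := y])) \<and>
       (\<forall>as i x r. args C A q \<sigma> as \<longrightarrow> i < q \<longrightarrow> x \<in> A (scod C \<sigma>) \<longrightarrow>
          \<phi> \<sigma> (as[i := smult r x]) = smult r (\<phi> \<sigma> (as[i := x]))) \<and>
       (\<forall>as. args C A q \<sigma> as \<longrightarrow> e (scod C \<sigma>) \<in> set as \<longrightarrow> \<phi> \<sigma> as = 0) \<and>
       (\<forall>as. args C A q \<sigma> as \<longrightarrow> degenerate C \<sigma> \<longrightarrow> \<phi> \<sigma> as = 0))"

text \<open>Hochschild differential \<open>C^{p,q} \<rightarrow> C^{p,q+1}\<close>, A(d sigma) being an A(c sigma)-bimodule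
  via sigma^*.\<close>
definition dHoch ::
  "('o, 'm) cat \<Rightarrow> ('o \<Rightarrow> 'a::ab_group_add \<Rightarrow> 'a \<Rightarrow> 'a) \<Rightarrow> ('m \<Rightarrow> 'a \<Rightarrow> 'a) \<Rightarrow> nat \<Rightarrow>
    ('o, 'm, 'a) cochain \<Rightarrow> ('o, 'm, 'a) cochain" where
  "dHoch C m f q \<phi> \<sigma> as =
     m (sdom \<sigma>) (pull f (snd \<sigma>) (as ! 0)) (\<phi> \<sigma> (tl as))
     + (\<Sum>i\<in>{1..q}. sgn_pow i (\<phi> \<sigma> (take (i - 1) as @ [m (scod C \<sigma>) (as ! (i - 1)) (as ! i)] @ drop (i + 1) as)))
     + sgn_pow (q + 1) (m (sdom \<sigma>) (\<phi> \<sigma> (take q as)) (pull f (snd \<sigma>) (as ! q)))"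

definition dsimp ::
  "('o, 'm) cat \<Rightarrow> ('m \<Rightarrow> 'a::ab_group_add \<Rightarrow> 'a) \<Rightarrow> nat \<Rightarrow>
    ('o, 'm, 'a) cochain \<Rightarrow> ('o, 'm, 'a) cochain" where
  "dsimp C f p \<phi> \<sigma> as =
     f (hd (snd \<sigma>)) (\<phi> (face C p 0 \<sigma>) as)
     + (\<Sum>i\<in>{1..p}. sgn_pow i (\<phi> (face C p i \<sigma>) as))
     + sgn_pow (p + 1) (\<phi> (face C p (p + 1) \<sigma>) (map (f (last (snd \<sigma>))) as))"

text \<open>A total cochain of degree n is a family Phi with Phi p \<in> C^{p, n-p} (p \<le> n).
  \<open>d_GS = (-1)^(n+1) d_simp + d_Hoch\<close> in degree n; component in \<open>C^{p, n+1-p}\<close>.\<close>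
definition dGS ::
  "('o, 'm) cat \<Rightarrow> ('o \<Rightarrow> 'a::ab_group_add \<Rightarrow> 'a \<Rightarrow> 'a) \<Rightarrow> ('m \<Rightarrow> 'a \<Rightarrow> 'a) \<Rightarrow> nat \<Rightarrow>
    (nat \<Rightarrow> ('o, 'm, 'a) cochain) \<Rightarrow> nat \<Rightarrow> ('o, 'm, 'a) cochain" where
  "dGS C m f n \<Phi> p \<sigma> as =
     (if p = 0 then 0 else sgn_pow (n + 1) (dsimp C f (p - 1) (\<Phi> (p - 1)) \<sigma> as))
     + (if p \<le> n then dHoch C m f (n - p) (\<Phi> p) \<sigma> as else 0)"

definition Z_GS ::
  "('o, 'm) cat \<Rightarrow> ('r::comm_ring_1 \<Rightarrow> 'a::ab_group_add \<Rightarrow> 'a) \<Rightarrow> ('o \<Rightarrow> 'a set) \<Rightarrow>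
    ('o \<Rightarrow> 'a \<Rightarrow> 'a \<Rightarrow> 'a) \<Rightarrow> ('o \<Rightarrow> 'a) \<Rightarrow> ('m \<Rightarrow> 'a \<Rightarrow> 'a) \<Rightarrow> nat \<Rightarrow>
    (nat \<Rightarrow> ('o, 'm, 'a) cochain) \<Rightarrow> bool" where
  "Z_GS C smult A m e f n \<Phi> \<longleftrightarrow>
     (\<forall>p\<le>n. nr_cochain C smult A e p (n - p) (\<Phi> p)) \<and>
     (\<forall>p\<le>n + 1. \<forall>\<sigma> as. simplex C p \<sigma> \<longrightarrow> args C A (n + 1 - p) \<sigma> as \<longrightarrow> dGS C m f n \<Phi> p \<sigma> as = 0)"

text \<open>n-cocycles of the normalized reduced subcomplex \<open>C_tGS\<close> (the part with q \<ge> 1):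
  components Phi p for p < n; the differential is the restriction of d_GS.\<close>
definition Z_tGS ::
  "('o, 'm) cat \<Rightarrow> ('r::comm_ring_1 \<Rightarrow> 'a::ab_group_add \<Rightarrow> 'a) \<Rightarrow> ('o \<Rightarrow> 'a set) \<Rightarrow>
    ('o \<Rightarrow> 'a \<Rightarrow> 'a \<Rightarrow> 'a) \<Rightarrow> ('o \<Rightarrow> 'a) \<Rightarrow> ('m \<Rightarrow> 'a \<Rightarrow> 'a) \<Rightarrow> nat \<Rightarrow>
    (nat \<Rightarrow> ('o, 'm, 'a) cochain) \<Rightarrow> bool" where
  "Z_tGS C smult A m e f n \<Phi> \<longleftrightarrow>
     (\<forall>p<n. nr_cochain C smult A e p (n - p) (\<Phi> p)) \<and>
     (\<forall>p\<le>n. \<forall>\<sigma> as. simplex C p \<sigma> \<longrightarrow> args C A (n + 1 - p) \<sigma> as \<longrightarrow>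
        dGS C m f n (\<lambda>j. if j < n then \<Phi> j else (\<lambda>_ _. 0)) p \<sigma> as = 0)"

text \<open>m1 U a b \<in> A U; f1 u a for u : V \<rightarrow> U, a \<in> A U; c1 u v \<in> A W for v : W \<rightarrow> V, u : V \<rightarrow> U
  (i.e. the value on the 2-simplex W \<rightarrow> V \<rightarrow> U).\<close>

definition cochain_of_m :: "('o \<Rightarrow> 'a \<Rightarrow> 'a \<Rightarrow> 'a) \<Rightarrow> ('o, 'm, 'a) cochain" where
  "cochain_of_m m1 = (\<lambda>\<sigma> as. m1 (fst \<sigma>) (as ! 0) (as ! 1))"

definition cochain_of_f :: "('m \<Rightarrow> 'a \<Rightarrow> 'a) \<Rightarrow> ('o, 'm, 'a) cochain" where
  "cochain_of_f f1 = (\<lambda>\<sigma> as. f1 (snd \<sigma> ! 0) (as ! 0))"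

definition cochain_of_c :: "('m \<Rightarrow> 'm \<Rightarrow> 'a) \<Rightarrow> ('o, 'm, 'a) cochain" where
  "cochain_of_c c1 = (\<lambda>\<sigma> as. c1 (snd \<sigma> ! 1) (snd \<sigma> ! 0))"

definition GS2 :: "('o \<Rightarrow> 'a::zero \<Rightarrow> 'a \<Rightarrow> 'a) \<Rightarrow> ('m \<Rightarrow> 'a \<Rightarrow> 'a) \<Rightarrow> ('m \<Rightarrow> 'm \<Rightarrow> 'a) \<Rightarrow>
    nat \<Rightarrow> ('o, 'm, 'a) cochain" where
  "GS2 m1 f1 c1 p = (if p = 0 then cochain_of_m m1 else if p = 1 then cochain_of_f f1
                     else if p = 2 then cochain_of_c c1 else (\<lambda>_ _. 0))"

definition tGS2 :: "('o \<Rightarrow> 'a::zero \<Rightarrow> 'a \<Rightarrow> 'a) \<Rightarrow> ('m \<Rightarrow> 'a \<Rightarrow> 'a) \<Rightarrow>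
    nat \<Rightarrow> ('o, 'm, 'a) cochain" where
  "tGS2 m1 f1 p = (if p = 0 then cochain_of_m m1 else if p = 1 then cochain_of_f f1 else (\<lambda>_ _. 0))"

section \<open>First order deformations\<close>

text \<open>A(U)[eps] = A(U) \<oplus> A(U) eps, elements (a, b) = a + b eps; k[eps] acts by
  (r + s eps)(a + b eps) = r a + (r b + s a) eps.\<close>

fun eps_smult :: "('k \<Rightarrow> 'a::ab_group_add \<Rightarrow> 'a) \<Rightarrow> 'k dnum \<Rightarrow> 'a \<times> 'a \<Rightarrow> 'a \<times> 'a" where
  "eps_smult smult (DN r s) (a, b) = (smult r a, smult r b + smult s a)"

definition eps_carrier :: "('o \<Rightarrow> 'a set) \<Rightarrow> 'o \<Rightarrow> ('a \<times> 'a) set" where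
  "eps_carrier A U = A U \<times> A U"

text \<open>m + m1 eps, extended k[eps]-bilinearly.\<close>
fun eps_mult :: "('o \<Rightarrow> 'a::ab_group_add \<Rightarrow> 'a \<Rightarrow> 'a) \<Rightarrow> ('o \<Rightarrow> 'a \<Rightarrow> 'a \<Rightarrow> 'a) \<Rightarrow> 'o \<Rightarrow>
    'a \<times> 'a \<Rightarrow> 'a \<times> 'a \<Rightarrow> 'a \<times> 'a" where
  "eps_mult m m1 U (a, b) (a', b') = (m U a a', m U a b' + m U b a' + m1 U a a')"

definition eps_unit :: "('o \<Rightarrow> 'a::zero) \<Rightarrow> 'o \<Rightarrow> 'a \<times> 'a" where
  "eps_unit e U = (e U, 0)"

text \<open>f + f1 eps, extended k[eps]-linearly.\<close>
fun eps_map :: "('m \<Rightarrow> 'a::ab_group_add \<Rightarrow> 'a) \<Rightarrow> ('m \<Rightarrow> 'a \<Rightarrow> 'a) \<Rightarrow> 'm \<Rightarrow> 'a \<times> 'a \<Rightarrow> 'a \<times> 'a" where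
  "eps_map f f1 u (a, b) = (f u a, f u b + f1 u a)"

text \<open>1 + c1 eps, where c^{u,v} lives in A(W), W = Dom v.\<close>
definition eps_twist :: "('o, 'm) cat \<Rightarrow> ('o \<Rightarrow> 'a) \<Rightarrow> ('m \<Rightarrow> 'm \<Rightarrow> 'a) \<Rightarrow> 'm \<Rightarrow> 'm \<Rightarrow> 'a \<times> 'a" where
  "eps_twist C e c1 u v = (e (Dom C v), c1 u v)"

definition twisted_deformation where
  "twisted_deformation C A m e f m1 f1 c1 =
     (eps_carrier A, eps_mult m m1, eps_unit e, eps_map f f1, eps_twist C e c1)"

definition presheaf_deformation where
  "presheaf_deformation A m e f m1 f1 = (eps_carrier A, eps_mult m m1, eps_unit e, eps_map f f1)"

definition underlying_presheaf where
  "underlying_presheaf T = (case T of (A', m', e', f', c') \<Rightarrow> (A', m', e', f'))"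

end

theory Submission
  imports Defs
begin


locale ctx =
  fixes C :: "('o, 'm) cat"
    and smult :: "'k::comm_ring_1 \<Rightarrow> 'a::ab_group_add \<Rightarrow> 'a"
    and A :: "'o \<Rightarrow> 'a set" and m :: "'o \<Rightarrow> 'a \<Rightarrow> 'a \<Rightarrow> 'a" and e :: "'o \<Rightarrow> 'a"
    and f :: "'m \<Rightarrow> 'a \<Rightarrow> 'a"
    and m1 :: "'o \<Rightarrow> 'a \<Rightarrow> 'a \<Rightarrow> 'a" and f1 :: "'m \<Rightarrow> 'a \<Rightarrow> 'a" and c1 :: "'m \<Rightarrow> 'm \<Rightarrow> 'a"
  assumes cat: "category C"
    and ps: "presheaf C smult A m e f"
    and comm: "\<forall>U\<in>Obj C. commutative_on (A U) (m U)"
    and Z: "Z_GS C smult A m e f 2 (GS2 m1 f1 c1)"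
begin

lemma alg: "U \<in> Obj C \<Longrightarrow> algebra_on smult (A U) (m U) (e U)"
  using ps unfolding presheaf_def by blast

lemma hom: "u \<in> Mor C \<Longrightarrow> algebra_hom smult (A (Cod C u)) (m (Cod C u)) (e (Cod C u))
                                   (A (Dom C u)) (m (Dom C u)) (e (Dom C u)) (f u)"
  using ps unfolding presheaf_def by blast

lemma fid: "U \<in> Obj C \<Longrightarrow> a \<in> A U \<Longrightarrow> f (Ident C U) a = a"
  using ps unfolding presheaf_def by blast

lemma fcomp: "u \<in> Mor C \<Longrightarrow> v \<in> Mor C \<Longrightarrow> Cod C v = Dom C u \<Longrightarrow> a \<in> A (Cod C u) \<Longrightarrow>
   f (Comp C u v) a = f v (f u a)"
  using ps unfolding presheaf_def by blast

lemma Mdom[simp]: "u \<in> Mor C \<Longrightarrow> Dom C u \<in> Obj C" using cat unfolding category_def by blast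
lemma Mcod[simp]: "u \<in> Mor C \<Longrightarrow> Cod C u \<in> Obj C" using cat unfolding category_def by blast
lemma Id[simp]: "U \<in> Obj C \<Longrightarrow> Ident C U \<in> Mor C" "U \<in> Obj C \<Longrightarrow> Dom C (Ident C U) = U"
  "U \<in> Obj C \<Longrightarrow> Cod C (Ident C U) = U" using cat unfolding category_def by blast+
lemma Cp[simp]: "u \<in> Mor C \<Longrightarrow> v \<in> Mor C \<Longrightarrow> Cod C v = Dom C u \<Longrightarrow> Comp C u v \<in> Mor C"
  "u \<in> Mor C \<Longrightarrow> v \<in> Mor C \<Longrightarrow> Cod C v = Dom C u \<Longrightarrow> Dom C (Comp C u v) = Dom C v"
  "u \<in> Mor C \<Longrightarrow> v \<in> Mor C \<Longrightarrow> Cod C v = Dom C u \<Longrightarrow> Cod C (Comp C u v) = Cod C u"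
  using cat unfolding category_def by blast+

context fixes U assumes U: "U \<in> Obj C" begin
lemma zc[simp]: "0 \<in> A U" using alg[OF U] unfolding algebra_on_def module_on_def by simp
lemma ac[simp]: "x \<in> A U \<Longrightarrow> y \<in> A U \<Longrightarrow> x + y \<in> A U" using alg[OF U] unfolding algebra_on_def module_on_def by simp
lemma nc[simp]: "x \<in> A U \<Longrightarrow> - x \<in> A U" using alg[OF U] unfolding algebra_on_def module_on_def by simp
lemma sc[simp]: "x \<in> A U \<Longrightarrow> smult r x \<in> A U" using alg[OF U] unfolding algebra_on_def module_on_def by simp
lemma s_add: "x \<in> A U \<Longrightarrow> y \<in> A U \<Longrightarrow> smult r (x + y) = smult r x + smult r y" using alg[OF U] unfolding algebra_on_def module_on_def by simp
lemma s_radd: "x \<in> A U \<Longrightarrow> smult (r + s) x = smult r x + smult s x" using alg[OF U] unfolding algebra_on_def module_on_def by simp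
lemma s_mul: "x \<in> A U \<Longrightarrow> smult (r * s) x = smult r (smult s x)" using alg[OF U] unfolding algebra_on_def module_on_def by simp
lemma s_one: "x \<in> A U \<Longrightarrow> smult 1 x = x" using alg[OF U] unfolding algebra_on_def module_on_def by simp
lemma ec[simp]: "e U \<in> A U" using alg[OF U] unfolding algebra_on_def by simp
lemma mc[simp]: "x \<in> A U \<Longrightarrow> y \<in> A U \<Longrightarrow> m U x y \<in> A U" using alg[OF U] unfolding algebra_on_def by simp
lemma m_ladd: "x \<in> A U \<Longrightarrow> y \<in> A U \<Longrightarrow> z \<in> A U \<Longrightarrow> m U (x + y) z = m U x z + m U y z" using alg[OF U] unfolding algebra_on_def by simp
lemma m_radd: "x \<in> A U \<Longrightarrow> y \<in> A U \<Longrightarrow> z \<in> A U \<Longrightarrow> m U x (y + z) = m U x y + m U x z" using alg[OF U] unfolding algebra_on_def by simp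
lemma m_ls: "x \<in> A U \<Longrightarrow> y \<in> A U \<Longrightarrow> m U (smult r x) y = smult r (m U x y)" using alg[OF U] unfolding algebra_on_def by simp
lemma m_rs: "x \<in> A U \<Longrightarrow> y \<in> A U \<Longrightarrow> m U x (smult r y) = smult r (m U x y)" using alg[OF U] unfolding algebra_on_def by simp
lemma m_assoc: "x \<in> A U \<Longrightarrow> y \<in> A U \<Longrightarrow> z \<in> A U \<Longrightarrow> m U (m U x y) z = m U x (m U y z)" using alg[OF U] unfolding algebra_on_def by simp
lemma m_lu[simp]: "x \<in> A U \<Longrightarrow> m U (e U) x = x" using alg[OF U] unfolding algebra_on_def by simp
lemma m_ru[simp]: "x \<in> A U \<Longrightarrow> m U x (e U) = x" using alg[OF U] unfolding algebra_on_def by simp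
lemma dc[simp]: "x \<in> A U \<Longrightarrow> y \<in> A U \<Longrightarrow> x - y \<in> A U" unfolding diff_conv_add_uminus by (intro ac nc)
lemma s_zero: "x \<in> A U \<Longrightarrow> smult 0 x = 0"
proof -
  assume x: "x \<in> A U"
  have "smult (0+0) x = smult 0 x + smult 0 x" by (rule s_radd[OF x])
  thus ?thesis by simp
qed
lemma m_comm: "x \<in> A U \<Longrightarrow> y \<in> A U \<Longrightarrow> m U x y = m U y x"
  using comm U unfolding commutative_on_def by (meson)
lemma m_l0[simp]: "x \<in> A U \<Longrightarrow> m U 0 x = 0"
proof -
  assume x: "x \<in> A U"
  have "m U (0+0) x = m U 0 x + m U 0 x" by (rule m_ladd) (simp_all add: x)
  thus ?thesis by simp
qed
lemma m_r0[simp]: "x \<in> A U \<Longrightarrow> m U x 0 = 0"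
proof -
  assume x: "x \<in> A U"
  have "m U x (0+0) = m U x 0 + m U x 0" by (rule m_radd) (simp_all add: x)
  thus ?thesis by simp
qed
end

context fixes u assumes u: "u \<in> Mor C" begin
lemma fc[simp]: "x \<in> A (Cod C u) \<Longrightarrow> f u x \<in> A (Dom C u)" using hom[OF u] unfolding algebra_hom_def by simp
lemma f_add: "x \<in> A (Cod C u) \<Longrightarrow> y \<in> A (Cod C u) \<Longrightarrow> f u (x + y) = f u x + f u y" using hom[OF u] unfolding algebra_hom_def by simp
lemma f_s: "x \<in> A (Cod C u) \<Longrightarrow> f u (smult r x) = smult r (f u x)" using hom[OF u] unfolding algebra_hom_def by simp
lemma f_m: "x \<in> A (Cod C u) \<Longrightarrow> y \<in> A (Cod C u) \<Longrightarrow> f u (m (Cod C u) x y) = m (Dom C u) (f u x) (f u y)" using hom[OF u] unfolding algebra_hom_def by simp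
lemma f_e[simp]: "f u (e (Cod C u)) = e (Dom C u)" using hom[OF u] unfolding algebra_hom_def by simp
lemma f_0[simp]: "f u 0 = 0"
proof -
  have "f u (0+0) = f u 0 + f u 0" by (rule f_add) (simp_all add: u)
  thus ?thesis by simp
qed
end

end


lemma nrB: "nr_cochain C sm A e p q \<phi> \<Longrightarrow> simplex C p \<sigma> \<Longrightarrow>
       (\<forall>as. args C A q \<sigma> as \<longrightarrow> \<phi> \<sigma> as \<in> A (sdom \<sigma>)) \<and>
       (\<forall>as i x y. args C A q \<sigma> as \<longrightarrow> i < q \<longrightarrow> x \<in> A (scod C \<sigma>) \<longrightarrow> y \<in> A (scod C \<sigma>) \<longrightarrow>
          \<phi> \<sigma> (as[i := x + y]) = \<phi> \<sigma> (as[i := x]) + \<phi> \<sigma> (as[i := y])) \<and>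
       (\<forall>as i x r. args C A q \<sigma> as \<longrightarrow> i < q \<longrightarrow> x \<in> A (scod C \<sigma>) \<longrightarrow>
          \<phi> \<sigma> (as[i := sm r x]) = sm r (\<phi> \<sigma> (as[i := x]))) \<and>
       (\<forall>as. args C A q \<sigma> as \<longrightarrow> e (scod C \<sigma>) \<in> set as \<longrightarrow> \<phi> \<sigma> as = 0) \<and>
       (\<forall>as. args C A q \<sigma> as \<longrightarrow> degenerate C \<sigma> \<longrightarrow> \<phi> \<sigma> as = 0)"
  unfolding nr_cochain_def by (erule allE[where x=\<sigma>], erule mp)

lemma nrD1: "nr_cochain C sm A e p q \<phi> \<Longrightarrow> simplex C p \<sigma> \<Longrightarrow> args C A q \<sigma> as \<Longrightarrow> \<phi> \<sigma> as \<in> A (sdom \<sigma>)"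
  by (drule (1) nrB) (elim conjE, erule allE[where x=as], erule mp)
lemma nrD2: "nr_cochain C sm A e p q \<phi> \<Longrightarrow> simplex C p \<sigma> \<Longrightarrow> args C A q \<sigma> as \<Longrightarrow> i < q \<Longrightarrow> x \<in> A (scod C \<sigma>) \<Longrightarrow> y \<in> A (scod C \<sigma>) \<Longrightarrow>
          \<phi> \<sigma> (as[i := x + y]) = \<phi> \<sigma> (as[i := x]) + \<phi> \<sigma> (as[i := y])"
  apply (drule (1) nrB) apply (elim conjE)
  apply (drule spec[where x=as], drule spec[where x=i], drule spec[where x=x], drule spec[where x=y])
  by (elim impE; assumption)
lemma nrD3: "nr_cochain C sm A e p q \<phi> \<Longrightarrow> simplex C p \<sigma> \<Longrightarrow> args C A q \<sigma> as \<Longrightarrow> i < q \<Longrightarrow> x \<in> A (scod C \<sigma>) \<Longrightarrow>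
          \<phi> \<sigma> (as[i := sm r x]) = sm r (\<phi> \<sigma> (as[i := x]))"
  apply (drule (1) nrB) apply (elim conjE)
  apply (drule spec[where x=as], drule spec[where x=i], drule spec[where x=x], drule spec[where x=r])
  by (elim impE; assumption)
lemma nrD4: "nr_cochain C sm A e p q \<phi> \<Longrightarrow> simplex C p \<sigma> \<Longrightarrow> args C A q \<sigma> as \<Longrightarrow> e (scod C \<sigma>) \<in> set as \<Longrightarrow> \<phi> \<sigma> as = 0"
  apply (drule (1) nrB) apply (elim conjE)
  by blast
lemma nrD5: "nr_cochain C sm A e p q \<phi> \<Longrightarrow> simplex C p \<sigma> \<Longrightarrow> args C A q \<sigma> as \<Longrightarrow> degenerate C \<sigma> \<Longrightarrow> \<phi> \<sigma> as = 0"
  apply (drule (1) nrB) apply (elim conjE)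
  by blast


context ctx begin
lemma Zc1: "\<forall>p\<le>2. nr_cochain C smult A e p (2 - p) (GS2 m1 f1 c1 p)"
  using Z unfolding Z_GS_def by (rule conjunct1)
lemma Zc2: "\<forall>p\<le>2 + 1. \<forall>\<sigma> as. simplex C p \<sigma> \<longrightarrow> args C A (2 + 1 - p) \<sigma> as \<longrightarrow> dGS C m f 2 (GS2 m1 f1 c1) p \<sigma> as = 0"
  using Z unfolding Z_GS_def by (rule conjunct2)
lemma nr0: "nr_cochain C smult A e 0 2 (cochain_of_m m1)"
  using Zc1[rule_format, of 0] by (simp add: GS2_def)
lemma nr1: "nr_cochain C smult A e 1 1 (cochain_of_f f1)"
  using Zc1[rule_format, of 1] by (simp add: GS2_def)
lemma nr2: "nr_cochain C smult A e 2 0 (cochain_of_c c1)"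
  using Zc1[rule_format, of 2] by (simp add: GS2_def)
lemma cyc: "p \<le> 3 \<Longrightarrow> simplex C p \<sigma> \<Longrightarrow> args C A (3 - p) \<sigma> as \<Longrightarrow> dGS C m f 2 (GS2 m1 f1 c1) p \<sigma> as = 0"
  using Zc2[rule_format, of p \<sigma> as] by simp
end


lemma I12[simp]: "{1..2::nat} = {1,2}" by auto
lemma I11[simp]: "{1..1::nat} = {1}" by auto
lemma I12s[simp]: "{Suc 0..2} = {Suc 0, 2}" by auto
lemma I11s[simp]: "{Suc 0..Suc 0} = {Suc 0}" by auto
lemma I10[simp]: "{1..0::nat} = {}" by auto

context ctx begin

lemma s0[simp]: "simplex C 0 (U, []) \<longleftrightarrow> U \<in> Obj C" by (simp add: simplex_def)
lemma sc0[simp]: "scod C (U, []) = U" by (simp add: scod_def)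
lemma sd[simp]: "sdom (U, l) = U" by (simp add: sdom_def)

context fixes U assumes U: "U \<in> Obj C" begin
lemma m1c[simp]: "a \<in> A U \<Longrightarrow> b \<in> A U \<Longrightarrow> m1 U a b \<in> A U"
  using nrD1[OF nr0, of "(U,[])" "[a,b]"] U by (simp add: cochain_of_m_def args_def)
lemma m1_ladd: "x \<in> A U \<Longrightarrow> y \<in> A U \<Longrightarrow> b \<in> A U \<Longrightarrow> m1 U (x + y) b = m1 U x b + m1 U y b"
  using nrD2[OF nr0, of "(U,[])" "[x,b]" 0 x y] U by (simp add: cochain_of_m_def args_def)
lemma m1_radd: "x \<in> A U \<Longrightarrow> y \<in> A U \<Longrightarrow> a \<in> A U \<Longrightarrow> m1 U a (x + y) = m1 U a x + m1 U a y"
  using nrD2[OF nr0, of "(U,[])" "[a,x]" 1 x y] U by (simp add: cochain_of_m_def args_def)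
lemma m1_ls: "x \<in> A U \<Longrightarrow> b \<in> A U \<Longrightarrow> m1 U (smult r x) b = smult r (m1 U x b)"
  using nrD3[OF nr0, of "(U,[])" "[x,b]" 0 x r] U by (simp add: cochain_of_m_def args_def)
lemma m1_rs: "x \<in> A U \<Longrightarrow> a \<in> A U \<Longrightarrow> m1 U a (smult r x) = smult r (m1 U a x)"
  using nrD3[OF nr0, of "(U,[])" "[a,x]" 1 x r] U by (simp add: cochain_of_m_def args_def)
lemma m1_le[simp]: "b \<in> A U \<Longrightarrow> m1 U (e U) b = 0"
  using nrD4[OF nr0, of "(U,[])" "[e U,b]"] U by (simp add: cochain_of_m_def args_def)
lemma m1_re[simp]: "a \<in> A U \<Longrightarrow> m1 U a (e U) = 0"
  using nrD4[OF nr0, of "(U,[])" "[a, e U]"] U by (simp add: cochain_of_m_def args_def)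
lemma H0: "a \<in> A U \<Longrightarrow> b \<in> A U \<Longrightarrow> c \<in> A U \<Longrightarrow>
  m U (m1 U a b) c = m U a (m1 U b c) + (m1 U a (m U b c) - m1 U (m U a b) c)"
  using cyc[of 0 "(U,[])" "[a,b,c]"] U
  by (simp add: cochain_of_m_def args_def dGS_def dHoch_def GS2_def sgn_pow_def)
end

lemma s1[simp]: "simplex C (Suc 0) (U, [u]) \<longleftrightarrow> u \<in> Mor C \<and> U = Dom C u" by (auto simp add: simplex_def)
lemma s2[simp]: "simplex C 2 (U, [v,u]) \<longleftrightarrow> v \<in> Mor C \<and> u \<in> Mor C \<and> U = Dom C v \<and> Cod C v = Dom C u"
  by (auto simp add: simplex_def)
lemma s3[simp]: "simplex C 3 (U, [w,v,u]) \<longleftrightarrow> w \<in> Mor C \<and> v \<in> Mor C \<and> u \<in> Mor C \<and> U = Dom C w \<and> Cod C w = Dom C v \<and> Cod C v = Dom C u"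
  by (auto simp add: simplex_def)
lemma scl[simp]: "scod C (U, l) = endpt C U l" by (simp add: scod_def)

context fixes u assumes u: "u \<in> Mor C" begin
lemma f1c[simp]: "a \<in> A (Cod C u) \<Longrightarrow> f1 u a \<in> A (Dom C u)"
  using nrD1[OF nr1, of "(Dom C u,[u])" "[a]"] u by (simp add: cochain_of_f_def args_def)
lemma f1_add: "x \<in> A (Cod C u) \<Longrightarrow> y \<in> A (Cod C u) \<Longrightarrow> f1 u (x + y) = f1 u x + f1 u y"
  using nrD2[OF nr1, of "(Dom C u,[u])" "[x]" 0 x y] u by (simp add: cochain_of_f_def args_def)
lemma f1_s: "x \<in> A (Cod C u) \<Longrightarrow> f1 u (smult r x) = smult r (f1 u x)"
  using nrD3[OF nr1, of "(Dom C u,[u])" "[x]" 0 x r] u by (simp add: cochain_of_f_def args_def)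
lemma f1_e[simp]: "f1 u (e (Cod C u)) = 0"
  using nrD4[OF nr1, of "(Dom C u,[u])" "[e (Cod C u)]"] u by (simp add: cochain_of_f_def args_def)
lemma H1: "a \<in> A (Cod C u) \<Longrightarrow> b \<in> A (Cod C u) \<Longrightarrow> f1 u (m (Cod C u) a b) =
   m1 (Dom C u) (f u a) (f u b) - f u (m1 (Cod C u) a b) + m (Dom C u) (f u a) (f1 u b) + m (Dom C u) (f1 u a) (f u b)"
proof -
  assume ab: "a \<in> A (Cod C u)" "b \<in> A (Cod C u)"
  have "m1 (Dom C u) (f u a) (f u b) - f u (m1 (Cod C u) a b) +
      (m (Dom C u) (f u a) (f1 u b) - f1 u (m (Cod C u) a b) +
       m (Dom C u) (f1 u a) (f u b)) = 0"
  using cyc[of 1 "(Dom C u,[u])" "[a,b]"] u ab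
  by (simp add: cochain_of_m_def cochain_of_f_def args_def dGS_def dHoch_def dsimp_def face_def GS2_def sgn_pow_def)
  thus ?thesis by (simp add: algebra_simps eq_neg_iff_add_eq_0 diff_eq_eq eq_diff_eq)
qed
end
lemma f1_id[simp]: "U \<in> Obj C \<Longrightarrow> a \<in> A U \<Longrightarrow> f1 (Ident C U) a = 0"
  using nrD5[OF nr1, of "(U,[Ident C U])" "[a]"] by (simp add: cochain_of_f_def args_def degenerate_def)

lemma c1c[simp]: "u \<in> Mor C \<Longrightarrow> v \<in> Mor C \<Longrightarrow> Cod C v = Dom C u \<Longrightarrow> c1 u v \<in> A (Dom C v)"
  using nrD1[OF nr2, of "(Dom C v,[v,u])" "[]"] by (simp add: cochain_of_c_def args_def)
lemma c1_r[simp]: "u \<in> Mor C \<Longrightarrow> c1 u (Ident C (Dom C u)) = 0"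
  using nrD5[OF nr2, of "(Dom C u,[Ident C (Dom C u), u])" "[]"] by (simp add: cochain_of_c_def args_def degenerate_def)
lemma c1_l[simp]: "u \<in> Mor C \<Longrightarrow> c1 (Ident C (Cod C u)) u = 0"
  using nrD5[OF nr2, of "(Dom C u,[u, Ident C (Cod C u)])" "[]"] by (simp add: cochain_of_c_def args_def degenerate_def)
lemma H2: "u \<in> Mor C \<Longrightarrow> v \<in> Mor C \<Longrightarrow> Cod C v = Dom C u \<Longrightarrow> a \<in> A (Cod C u) \<Longrightarrow>
   f1 (Comp C u v) a = f v (f1 u a) + f1 v (f u a)"
proof -
  assume h: "u \<in> Mor C" "v \<in> Mor C" "Cod C v = Dom C u" "a \<in> A (Cod C u)"
  have "f1 (Comp C u v) a - f v (f1 u a) - f1 v (f u a) +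
      (m (Dom C v) (f v (f u a)) (c1 u v) - m (Dom C v) (c1 u v) (f v (f u a))) = 0"
  using cyc[of 2 "(Dom C v,[v,u])" "[a]"] h
  by (simp add: cochain_of_c_def cochain_of_f_def args_def dGS_def dHoch_def dsimp_def face_def GS2_def sgn_pow_def)
  moreover have "m (Dom C v) (f v (f u a)) (c1 u v) = m (Dom C v) (c1 u v) (f v (f u a))"
  proof (rule m_comm)
    show "Dom C v \<in> Obj C" using h by simp
    have "f u a \<in> A (Cod C v)" using h by simp
    thus "f v (f u a) \<in> A (Dom C v)" by (rule fc[OF h(2)])
    show "c1 u v \<in> A (Dom C v)" using h by simp
  qed
  ultimately show ?thesis by (simp add: algebra_simps eq_neg_iff_add_eq_0 diff_eq_eq eq_diff_eq)
qed
lemma H3: "u \<in> Mor C \<Longrightarrow> v \<in> Mor C \<Longrightarrow> w \<in> Mor C \<Longrightarrow> Cod C v = Dom C u \<Longrightarrow> Cod C w = Dom C v \<Longrightarrow>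
  c1 u (Comp C v w) + c1 v w = c1 (Comp C u v) w + f w (c1 u v)"
  using cyc[of 3 "(Dom C w,[w,v,u])" "[]"]
  by (simp add: cochain_of_c_def args_def dGS_def dsimp_def face_def GS2_def sgn_pow_def algebra_simps eq_diff_eq diff_eq_eq)
end


context ctx begin
context fixes U assumes U: "U \<in> Obj C" begin

lemma ep_smul: "a \<in> A U \<Longrightarrow> b \<in> A U \<Longrightarrow> c \<in> A U \<Longrightarrow> d \<in> A U \<Longrightarrow>
  eps_smult smult \<rho> (a + c, b + d) = eps_smult smult \<rho> (a,b) + eps_smult smult \<rho> (c,d)"
  using U by (cases \<rho>) (simp add: s_add add_ac)
lemma ep_sadd: "a \<in> A U \<Longrightarrow> b \<in> A U \<Longrightarrow>
  eps_smult smult (\<rho> + \<tau>) (a,b) = eps_smult smult \<rho> (a,b) + eps_smult smult \<tau> (a,b)"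
  using U by (cases \<rho>; cases \<tau>) (simp add: s_add s_radd add_ac)
lemma ep_smulmul: "a \<in> A U \<Longrightarrow> b \<in> A U \<Longrightarrow>
  eps_smult smult (\<rho> * \<tau>) (a,b) = eps_smult smult \<rho> (eps_smult smult \<tau> (a,b))"
  using U by (cases \<rho>; cases \<tau>) (simp add: s_add s_radd s_mul add_ac mult.commute)
lemma ep_sone: "a \<in> A U \<Longrightarrow> b \<in> A U \<Longrightarrow> eps_smult smult 1 (a,b) = (a,b)"
  using U by (simp add: one_dnum_def s_one s_zero)
lemma ep_sc: "a \<in> A U \<Longrightarrow> b \<in> A U \<Longrightarrow> eps_smult smult \<rho> (a,b) \<in> A U \<times> A U"
  using U by (cases \<rho>) (simp add: U)

lemma ep_mc: "a \<in> A U \<Longrightarrow> b \<in> A U \<Longrightarrow> c \<in> A U \<Longrightarrow> d \<in> A U \<Longrightarrow>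
   eps_mult m m1 U (a,b) (c,d) \<in> A U \<times> A U"
  using U by (simp add:)
lemma ep_ml: "a \<in> A U \<Longrightarrow> b \<in> A U \<Longrightarrow> c \<in> A U \<Longrightarrow> d \<in> A U \<Longrightarrow> g \<in> A U \<Longrightarrow> h \<in> A U \<Longrightarrow>
   eps_mult m m1 U (a + c, b + d) (g,h) = eps_mult m m1 U (a,b) (g,h) + eps_mult m m1 U (c,d) (g,h)"
  using U by (simp add: m_ladd m1_ladd add_ac)
lemma ep_mr: "a \<in> A U \<Longrightarrow> b \<in> A U \<Longrightarrow> c \<in> A U \<Longrightarrow> d \<in> A U \<Longrightarrow> g \<in> A U \<Longrightarrow> h \<in> A U \<Longrightarrow>
   eps_mult m m1 U (g,h) (a + c, b + d) = eps_mult m m1 U (g,h) (a,b) + eps_mult m m1 U (g,h) (c,d)"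
  using U by (simp add: m_radd m1_radd add_ac)
lemma ep_mls: "a \<in> A U \<Longrightarrow> b \<in> A U \<Longrightarrow> g \<in> A U \<Longrightarrow> h \<in> A U \<Longrightarrow>
   eps_mult m m1 U (eps_smult smult \<rho> (a,b)) (g,h) = eps_smult smult \<rho> (eps_mult m m1 U (a,b) (g,h))"
  using U by (cases \<rho>) (simp add: m_ladd m1_ls m_ls s_add add_ac)
lemma ep_mrs: "a \<in> A U \<Longrightarrow> b \<in> A U \<Longrightarrow> g \<in> A U \<Longrightarrow> h \<in> A U \<Longrightarrow>
   eps_mult m m1 U (g,h) (eps_smult smult \<rho> (a,b)) = eps_smult smult \<rho> (eps_mult m m1 U (g,h) (a,b))"
  using U by (cases \<rho>) (simp add: m_radd m1_rs m_rs s_add add_ac)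
lemma ep_assoc: "a \<in> A U \<Longrightarrow> b \<in> A U \<Longrightarrow> c \<in> A U \<Longrightarrow> d \<in> A U \<Longrightarrow> g \<in> A U \<Longrightarrow> h \<in> A U \<Longrightarrow>
   eps_mult m m1 U (eps_mult m m1 U (a,b) (c,d)) (g,h) = eps_mult m m1 U (a,b) (eps_mult m m1 U (c,d) (g,h))"
  using U by (simp add: m_ladd m_radd m_assoc H0 algebra_simps)
lemma ep_unit: "a \<in> A U \<Longrightarrow> b \<in> A U \<Longrightarrow>
   eps_mult m m1 U (e U, 0) (a,b) = (a,b)"
  using U by (simp add: eps_unit_def)
lemma ep_unit2: "a \<in> A U \<Longrightarrow> b \<in> A U \<Longrightarrow>
   eps_mult m m1 U (a,b) (e U, 0) = (a,b)"
  using U by (simp add: eps_unit_def)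

lemma eps_alg: "algebra_on (eps_smult smult) (eps_carrier A U) (eps_mult m m1 U) (eps_unit e U)"
  using U unfolding algebra_on_def module_on_def eps_carrier_def
  by (auto simp: zero_prod_def eps_unit_def ep_smul ep_sadd ep_smulmul ep_sone ep_sc
      ep_mc ep_ml ep_mr ep_mls ep_mrs ep_assoc ep_unit ep_unit2 simp del: eps_smult.simps eps_mult.simps)
end
end


context ctx begin
context fixes u assumes u: "u \<in> Mor C" begin
lemma em_c: "a \<in> A (Cod C u) \<Longrightarrow> b \<in> A (Cod C u) \<Longrightarrow> eps_map f f1 u (a,b) \<in> A (Dom C u) \<times> A (Dom C u)"
  using u by simp
lemma em_add: "a \<in> A (Cod C u) \<Longrightarrow> b \<in> A (Cod C u) \<Longrightarrow> c \<in> A (Cod C u) \<Longrightarrow> d \<in> A (Cod C u) \<Longrightarrow>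
  eps_map f f1 u (a + c, b + d) = eps_map f f1 u (a,b) + eps_map f f1 u (c,d)"
  using u by (simp add: f_add f1_add add_ac)
lemma em_s: "a \<in> A (Cod C u) \<Longrightarrow> b \<in> A (Cod C u) \<Longrightarrow>
  eps_map f f1 u (eps_smult smult \<rho> (a,b)) = eps_smult smult \<rho> (eps_map f f1 u (a,b))"
  using u by (cases \<rho>) (simp add: f_add f_s f1_s s_add[OF Mdom[OF u]] add_ac)
lemma em_m: "a \<in> A (Cod C u) \<Longrightarrow> b \<in> A (Cod C u) \<Longrightarrow> c \<in> A (Cod C u) \<Longrightarrow> d \<in> A (Cod C u) \<Longrightarrow>
  eps_map f f1 u (eps_mult m m1 (Cod C u) (a,b) (c,d)) = eps_mult m m1 (Dom C u) (eps_map f f1 u (a,b)) (eps_map f f1 u (c,d))"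
  using u by (simp add: f_add f_m f1_add H1 m_radd m_ladd algebra_simps)
lemma em_e: "eps_map f f1 u (e (Cod C u), 0) = (e (Dom C u), 0)"
  using u by simp
lemma em_hom: "algebra_hom (eps_smult smult) (eps_carrier A (Cod C u)) (eps_mult m m1 (Cod C u)) (eps_unit e (Cod C u))
   (eps_carrier A (Dom C u)) (eps_mult m m1 (Dom C u)) (eps_unit e (Dom C u)) (eps_map f f1 u)"
  unfolding algebra_hom_def eps_carrier_def eps_unit_def
  using em_c em_add em_s em_m em_e
  by (auto simp del: eps_smult.simps eps_mult.simps eps_map.simps)
end

lemma em_id: "U \<in> Obj C \<Longrightarrow> a \<in> A U \<Longrightarrow> b \<in> A U \<Longrightarrow> eps_map f f1 (Ident C U) (a,b) = (a,b)"
  by (simp add: fid)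

lemma em_comp: "u \<in> Mor C \<Longrightarrow> v \<in> Mor C \<Longrightarrow> Cod C v = Dom C u \<Longrightarrow> a \<in> A (Cod C u) \<Longrightarrow> b \<in> A (Cod C u) \<Longrightarrow>
  eps_map f f1 (Comp C u v) (a,b) = eps_map f f1 v (eps_map f f1 u (a,b))"
proof -
  assume h: "u \<in> Mor C" "v \<in> Mor C" "Cod C v = Dom C u" "a \<in> A (Cod C u)" "b \<in> A (Cod C u)"
  have 1: "f u b \<in> A (Cod C v)" "f1 u a \<in> A (Cod C v)" using h by simp_all
  have "f v (f u b + f1 u a) = f v (f u b) + f v (f1 u a)" by (rule f_add[OF h(2) 1])
  thus ?thesis using h by (simp add: fcomp H2 add_ac)
qed

context fixes u v assumes u: "u \<in> Mor C" and v: "v \<in> Mor C" and uv: "Cod C v = Dom C u" begin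
lemma fvu_c: "a \<in> A (Cod C u) \<Longrightarrow> f v (f u a) \<in> A (Dom C v)"
proof -
  assume a: "a \<in> A (Cod C u)"
  have "f u a \<in> A (Cod C v)" using a u uv by simp
  thus ?thesis by (rule fc[OF v])
qed
lemma tw_c: "eps_twist C e c1 u v \<in> eps_carrier A (Dom C v)"
  using u v uv by (simp add: eps_twist_def eps_carrier_def)
lemma tw_inv: "\<exists>d\<in>eps_carrier A (Dom C v). eps_mult m m1 (Dom C v) (eps_twist C e c1 u v) d = eps_unit e (Dom C v) \<and>
    eps_mult m m1 (Dom C v) d (eps_twist C e c1 u v) = eps_unit e (Dom C v)"
  by (rule bexI[where x="(e (Dom C v), - c1 u v)"]) (use u v uv in \<open>simp_all add: eps_twist_def eps_carrier_def eps_unit_def\<close>)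
lemma tw_central: "x \<in> A (Dom C v) \<Longrightarrow> y \<in> A (Dom C v) \<Longrightarrow>
   eps_mult m m1 (Dom C v) (eps_twist C e c1 u v) (x,y) = eps_mult m m1 (Dom C v) (x,y) (eps_twist C e c1 u v)"
  using u v uv by (simp add: eps_twist_def m_comm[of "Dom C v" x "c1 u v"] add_ac)
lemma tw_comm: "a \<in> A (Cod C u) \<Longrightarrow> b \<in> A (Cod C u) \<Longrightarrow>
  eps_mult m m1 (Dom C v) (eps_twist C e c1 u v) (eps_map f f1 v (eps_map f f1 u (a,b))) =
  eps_mult m m1 (Dom C v) (eps_map f f1 (Comp C u v) (a,b)) (eps_twist C e c1 u v)"
proof -
  assume ab: "a \<in> A (Cod C u)" "b \<in> A (Cod C u)"
  have "eps_map f f1 v (eps_map f f1 u (a,b)) \<in> A (Dom C v) \<times> A (Dom C v)"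
  proof -
    have "f u b + f1 u a \<in> A (Cod C v)" using ab u uv Mdom[OF u] by simp
    hence "f v (f u b + f1 u a) \<in> A (Dom C v)" by (rule fc[OF v])
    moreover have "f1 v (f u a) \<in> A (Dom C v)" using ab u v uv by simp
    ultimately show ?thesis using ab Mdom[OF v] by (simp add: fvu_c)
  qed
  then obtain x y where xy: "eps_map f f1 v (eps_map f f1 u (a,b)) = (x,y)" "x \<in> A (Dom C v)" "y \<in> A (Dom C v)"
    by auto
  show ?thesis
    unfolding em_comp[OF u v uv ab] xy(1) by (rule tw_central[OF xy(2,3)])
qed
end

lemma tw_cocycle: "u \<in> Mor C \<Longrightarrow> v \<in> Mor C \<Longrightarrow> w \<in> Mor C \<Longrightarrow> Cod C w = Dom C v \<Longrightarrow> Cod C v = Dom C u \<Longrightarrow>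
  eps_mult m m1 (Dom C w) (eps_twist C e c1 u (Comp C v w)) (eps_twist C e c1 v w) =
  eps_mult m m1 (Dom C w) (eps_twist C e c1 (Comp C u v) w) (eps_map f f1 w (eps_twist C e c1 u v))"
proof -
  assume h: "u \<in> Mor C" "v \<in> Mor C" "w \<in> Mor C" "Cod C w = Dom C v" "Cod C v = Dom C u"
  have 1: "f w (e (Dom C v)) = e (Dom C w)" "f1 w (e (Dom C v)) = 0"
    using f_e[OF h(3)] f1_e[OF h(3)] h(4) by simp_all
  have 2: "c1 u (Comp C v w) \<in> A (Dom C w)" "c1 (Comp C u v) w \<in> A (Dom C w)"
    using h c1c[of u "Comp C v w"] c1c[of "Comp C u v" w] by simp_all
  have 3: "c1 v w + c1 u (Comp C v w) = f w (c1 u v) + c1 (Comp C u v) w"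
    using H3[OF h(1,2,3,5,4)] by (simp add: add.commute)
  show ?thesis using h 1 2 3 Mdom[OF h(3)] by (simp add: eps_twist_def)
qed

lemma tw_norm: "u \<in> Mor C \<Longrightarrow> eps_twist C e c1 u (Ident C (Dom C u)) = eps_unit e (Dom C u) \<and>
   eps_twist C e c1 (Ident C (Cod C u)) u = eps_unit e (Dom C u)"
  by (simp add: eps_twist_def eps_unit_def)

end


context ctx begin

abbreviation "Phi' \<equiv> (\<lambda>j. if j < 2 then tGS2 m1 f1 j else (\<lambda>_ _. 0))"

lemma dGS_eq01: "p \<le> 1 \<Longrightarrow> dGS C m f 2 Phi' p \<sigma> as = dGS C m f 2 (GS2 m1 f1 c1) p \<sigma> as"
proof -
  assume "p \<le> 1"
  hence "p = 0 \<or> p = 1" by auto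
  thus ?thesis by (auto simp add: dGS_def tGS2_def GS2_def)
qed

lemma simplex2E:
  assumes "simplex C 2 \<sigma>"
  obtains v u where "\<sigma> = (Dom C v, [v,u])" "v \<in> Mor C" "u \<in> Mor C" "Cod C v = Dom C u"
proof -
  obtain W l where s: "\<sigma> = (W, l)" by (cases \<sigma>)
  have "length l = 2" using assms s by (simp add: simplex_def)
  then obtain v u where l: "l = [v,u]"
    by (metis (no_types, lifting) One_nat_def Suc_1 length_0_conv length_Suc_conv)
  show ?thesis using assms s l that by simp
qed

lemma tcyc2: "simplex C 2 \<sigma> \<Longrightarrow> args C A 1 \<sigma> as \<Longrightarrow> dGS C m f 2 Phi' 2 \<sigma> as = 0"
proof -
  assume s: "simplex C 2 \<sigma>" and ar: "args C A 1 \<sigma> as"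
  obtain v u where sv: "\<sigma> = (Dom C v, [v,u])" "v \<in> Mor C" "u \<in> Mor C" "Cod C v = Dom C u"
    using s by (rule simplex2E)
  obtain a where a: "as = [a]" using ar unfolding args_def
    by (metis One_nat_def length_0_conv length_Suc_conv)
  have aA: "a \<in> A (Cod C u)" using ar sv a by (simp add: args_def)
  have x: "f v (f u a) \<in> A (Dom C v)" by (rule fvu_c[OF sv(3,2,4) aA])
  have c: "c1 u v \<in> A (Dom C v)" using sv by simp
  have W: "Dom C v \<in> Obj C" using sv by simp
  have cm: "m (Dom C v) (f v (f u a)) (c1 u v) = m (Dom C v) (c1 u v) (f v (f u a))"
    by (rule m_comm[OF W x c])
  have "dGS C m f 2 (GS2 m1 f1 c1) 2 \<sigma> as = 0" using cyc[of 2 \<sigma> as] s ar by simp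
  thus ?thesis using sv a cm x W
    by (simp add: dGS_def dHoch_def tGS2_def GS2_def cochain_of_c_def sgn_pow_def)
qed

lemma ztgs: "Z_tGS C smult A m e f 2 (tGS2 m1 f1)"
  unfolding Z_tGS_def
proof (intro conjI allI impI)
  fix p :: nat assume "p < 2"
  hence "p = 0 \<or> p = 1" by auto
  thus "nr_cochain C smult A e p (2 - p) (tGS2 m1 f1 p)"
    using nr0 nr1 by (auto simp add: tGS2_def)
next
  fix p :: nat and \<sigma> as assume p: "p \<le> 2" and s: "simplex C p \<sigma>" and ar: "args C A (2 + 1 - p) \<sigma> as"
  show "dGS C m f 2 Phi' p \<sigma> as = 0"
  proof (cases "p \<le> 1")
    case True
    have "dGS C m f 2 (GS2 m1 f1 c1) p \<sigma> as = 0" using cyc[of p \<sigma> as] s ar True by simp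
    thus ?thesis using dGS_eq01[OF True] by simp
  next
    case False
    hence "p = 2" using p by simp
    thus ?thesis using tcyc2 s ar by simp
  qed
qed

end


context ctx begin
lemma main_tw: "twisted_presheaf C (eps_smult smult) (eps_carrier A) (eps_mult m m1) (eps_unit e)
            (eps_map f f1) (eps_twist C e c1)"
  unfolding twisted_presheaf_def
proof (intro conjI ballI impI)
  fix U assume "U \<in> Obj C" thus "algebra_on (eps_smult smult) (eps_carrier A U) (eps_mult m m1 U) (eps_unit e U)"
    by (rule eps_alg)
next
  fix u assume "u \<in> Mor C" thus "algebra_hom (eps_smult smult) (eps_carrier A (Cod C u)) (eps_mult m m1 (Cod C u)) (eps_unit e (Cod C u))
   (eps_carrier A (Dom C u)) (eps_mult m m1 (Dom C u)) (eps_unit e (Dom C u)) (eps_map f f1 u)"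
    by (rule em_hom)
next
  fix U x assume "U \<in> Obj C" "x \<in> eps_carrier A U"
  thus "eps_map f f1 (Ident C U) x = x" by (cases x) (simp add: eps_carrier_def em_id del: eps_map.simps)
next
  fix u v assume "u \<in> Mor C" "v \<in> Mor C" "Cod C v = Dom C u"
  thus "eps_twist C e c1 u v \<in> eps_carrier A (Dom C v)" by (rule tw_c)
next
  fix u v assume "u \<in> Mor C" "v \<in> Mor C" "Cod C v = Dom C u"
  thus "\<exists>d\<in>eps_carrier A (Dom C v). eps_mult m m1 (Dom C v) (eps_twist C e c1 u v) d = eps_unit e (Dom C v) \<and>
    eps_mult m m1 (Dom C v) d (eps_twist C e c1 u v) = eps_unit e (Dom C v)" by (rule tw_inv)
next
  fix u v x assume h: "u \<in> Mor C" "v \<in> Mor C" "Cod C v = Dom C u" "x \<in> eps_carrier A (Cod C u)"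
  obtain a b where x: "x = (a,b)" "a \<in> A (Cod C u)" "b \<in> A (Cod C u)" using h(4) by (auto simp: eps_carrier_def)
  show "eps_mult m m1 (Dom C v) (eps_twist C e c1 u v) (eps_map f f1 v (eps_map f f1 u x)) =
    eps_mult m m1 (Dom C v) (eps_map f f1 (Comp C u v) x) (eps_twist C e c1 u v)"
    unfolding x(1) by (rule tw_comm[OF h(1-3) x(2,3)])
next
  fix u v w assume "u \<in> Mor C" "v \<in> Mor C" "w \<in> Mor C" "Cod C w = Dom C v" "Cod C v = Dom C u"
  thus "eps_mult m m1 (Dom C w) (eps_twist C e c1 u (Comp C v w)) (eps_twist C e c1 v w) =
    eps_mult m m1 (Dom C w) (eps_twist C e c1 (Comp C u v) w) (eps_map f f1 w (eps_twist C e c1 u v))"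
    by (rule tw_cocycle)
next
  fix u assume "u \<in> Mor C"
  thus "eps_twist C e c1 u (Ident C (Dom C u)) = eps_unit e (Dom C u)" using tw_norm by blast
next
  fix u assume "u \<in> Mor C"
  thus "eps_twist C e c1 (Ident C (Cod C u)) u = eps_unit e (Dom C u)" using tw_norm by blast
qed

lemma main_central: "central_twists C (eps_carrier A) (eps_mult m m1) (eps_twist C e c1)"
  unfolding central_twists_def
proof (intro ballI impI)
  fix u v x assume h: "u \<in> Mor C" "v \<in> Mor C" "Cod C v = Dom C u" "x \<in> eps_carrier A (Dom C v)"
  obtain a b where x: "x = (a,b)" "a \<in> A (Dom C v)" "b \<in> A (Dom C v)" using h(4) by (auto simp: eps_carrier_def)
  show "eps_mult m m1 (Dom C v) (eps_twist C e c1 u v) x = eps_mult m m1 (Dom C v) x (eps_twist C e c1 u v)"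
    unfolding x(1) by (rule tw_central[OF h(1-3) x(2,3)])
qed

lemma main_ps: "presheaf C (eps_smult smult) (eps_carrier A) (eps_mult m m1) (eps_unit e) (eps_map f f1)"
  unfolding presheaf_def
proof (intro conjI ballI impI)
  fix U assume "U \<in> Obj C" thus "algebra_on (eps_smult smult) (eps_carrier A U) (eps_mult m m1 U) (eps_unit e U)"
    by (rule eps_alg)
next
  fix u assume "u \<in> Mor C" thus "algebra_hom (eps_smult smult) (eps_carrier A (Cod C u)) (eps_mult m m1 (Cod C u)) (eps_unit e (Cod C u))
   (eps_carrier A (Dom C u)) (eps_mult m m1 (Dom C u)) (eps_unit e (Dom C u)) (eps_map f f1 u)"
    by (rule em_hom)
next
  fix U x assume "U \<in> Obj C" "x \<in> eps_carrier A U"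
  thus "eps_map f f1 (Ident C U) x = x" by (cases x) (simp add: eps_carrier_def em_id del: eps_map.simps)
next
  fix u v x assume h: "u \<in> Mor C" "v \<in> Mor C" "Cod C v = Dom C u" "x \<in> eps_carrier A (Cod C u)"
  obtain a b where x: "x = (a,b)" "a \<in> A (Cod C u)" "b \<in> A (Cod C u)" using h(4) by (auto simp: eps_carrier_def)
  show "eps_map f f1 (Comp C u v) x = eps_map f f1 v (eps_map f f1 u x)"
    unfolding x(1) by (rule em_comp[OF h(1-3) x(2,3)])
qed
end

theorem proposition2p24:
  fixes C :: "('o, 'm) cat"
    and smult :: "'k::comm_ring_1 \<Rightarrow> 'a::ab_group_add \<Rightarrow> 'a"
    and A :: "'o \<Rightarrow> 'a set" and m :: "'o \<Rightarrow> 'a \<Rightarrow> 'a \<Rightarrow> 'a" and e :: "'o \<Rightarrow> 'a"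
    and f :: "'m \<Rightarrow> 'a \<Rightarrow> 'a"
    and m1 :: "'o \<Rightarrow> 'a \<Rightarrow> 'a \<Rightarrow> 'a" and f1 :: "'m \<Rightarrow> 'a \<Rightarrow> 'a" and c1 :: "'m \<Rightarrow> 'm \<Rightarrow> 'a"
  assumes "category C"
    and "presheaf C smult A m e f"
    and "\<forall>U\<in>Obj C. commutative_on (A U) (m U)"
    and "Z_GS C smult A m e f 2 (GS2 m1 f1 c1)"
  shows "twisted_presheaf C (eps_smult smult) (eps_carrier A) (eps_mult m m1) (eps_unit e)
            (eps_map f f1) (eps_twist C e c1)
       \<and> central_twists C (eps_carrier A) (eps_mult m m1) (eps_twist C e c1)
       \<and> Z_tGS C smult A m e f 2 (tGS2 m1 f1)
       \<and> underlying_presheaf (twisted_deformation C A m e f m1 f1 c1) = presheaf_deformation A m e f m1 f1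
       \<and> presheaf C (eps_smult smult) (eps_carrier A) (eps_mult m m1) (eps_unit e) (eps_map f f1)"
proof -
  interpret ctx C smult A m e f m1 f1 c1 using assms by unfold_locales
  show ?thesis using main_tw main_central ztgs main_ps
    by (simp add: underlying_presheaf_def twisted_deformation_def presheaf_deformation_def)
qed

end
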